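(* Let $012345$ be a convex hexagon with area $A$. Suppose that all six vertex triangles (the triangles with vertices $i-1,i,i+1$, indices mod $6$) have the same area $k$, and that the triangle $013$ has area $\lambda k$. Then $$(\lambda-1)A^2-(\lambda^2+4\lambda-4)kA+2(\lambda^2+2\lambda-2)k^2=0,$$ or equivalently $$A=\frac{\lambda^2+2\lambda-2}{\lambda-1}\,k.$$
   Context: The vertices of the hexagon are labelled $0,\dots,5$ in cyclic order. *)

theory Defs
  imports Main "HOL.Real"
begin

type_synonym point = "real \<times> real"

text \<open>Cross product of vectors b - a and c - a (twice the signed area of triangle abc).\<close>
definition cross3 :: "point \<Rightarrow> point \<Rightarrow> point \<Rightarrow> real" where
  "cross3 a b c = (fst b - fst a) * (snd c - snd a) - (snd b - snd a) * (fst c - fst a)"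

definition tri_area :: "point \<Rightarrow> point \<Rightarrow> point \<Rightarrow> real" where
  "tri_area a b c = \<bar>cross3 a b c\<bar> / 2"

definition hv :: "(nat \<Rightarrow> point) \<Rightarrow> nat \<Rightarrow> point" where
  "hv P i = P (i mod 6)"

text \<open>Strictly convex hexagon with vertices P 0, ..., P 5 in cyclic order
  (either orientation): for every edge, all other vertices lie strictly on the
  same side of the line through that edge.\<close>
definition convex_hexagon :: "(nat \<Rightarrow> point) \<Rightarrow> bool" where
  "convex_hexagon P \<longleftrightarrow> (\<exists>s::real. (s = 1 \<or> s = -1) \<and>
     (\<forall>i<6. \<forall>j<6. j \<noteq> i \<and> j \<noteq> (i + 1) mod 6 \<longrightarrow>
        s * cross3 (hv P i) (hv P (i + 1)) (hv P j) > 0))"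

text \<open>Area of the polygon P 0 ... P 5 (shoelace formula).\<close>
definition hex_area :: "(nat \<Rightarrow> point) \<Rightarrow> real" where
  "hex_area P = \<bar>\<Sum>i<6. fst (hv P i) * snd (hv P (i + 1)) - fst (hv P (i + 1)) * snd (hv P i)\<bar> / 2"

end

theory Submission
  imports Defs
begin

definition emb :: "point \<Rightarrow> point \<Rightarrow> point \<Rightarrow> real \<Rightarrow> real \<Rightarrow> point" where
  "emb Z e f a b = (fst Z + a * fst e + b * fst f, snd Z + a * snd e + b * snd f)"

definition cr :: "real \<Rightarrow> real \<Rightarrow> real \<Rightarrow> real \<Rightarrow> real \<Rightarrow> real \<Rightarrow> real" where
  "cr a b a' b' a'' b'' = (a' - a) * (b'' - b) - (b' - b) * (a'' - a)"

lemma cross3_emb: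
  "cross3 (emb Z e f a b) (emb Z e f a' b') (emb Z e f a'' b'')
     = (fst e * snd f - snd e * fst f) * cr a b a' b' a'' b''"
  by (simp add: emb_def cross3_def cr_def algebra_simps)

lemma emb_exists:
  assumes "fst e * snd f - snd e * fst f \<noteq> 0"
  shows "\<exists>a b. Q = emb Z e f a b"
proof -
  define D where "D = fst e * snd f - snd e * fst f"
  have D: "D \<noteq> 0" using assms D_def by simp
  define a where "a = ((fst Q - fst Z) * snd f - (snd Q - snd Z) * fst f) / D"
  define b where "b = (fst e * (snd Q - snd Z) - snd e * (fst Q - fst Z)) / D"
  have Da: "D * a = (fst Q - fst Z) * snd f - (snd Q - snd Z) * fst f" using D by (simp add: a_def)
  have Db: "D * b = fst e * (snd Q - snd Z) - snd e * (fst Q - fst Z)" using D by (simp add: b_def)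
  have "D * (a * fst e + b * fst f) = (D * a) * fst e + (D * b) * fst f" by (simp add: algebra_simps)
  also have "\<dots> = D * (fst Q - fst Z)" unfolding Da Db by (simp add: D_def algebra_simps)
  finally have h1: "a * fst e + b * fst f = fst Q - fst Z" using D by simp
  have "D * (a * snd e + b * snd f) = (D * a) * snd e + (D * b) * snd f" by (simp add: algebra_simps)
  also have "\<dots> = D * (snd Q - snd Z)" unfolding Da Db by (simp add: D_def algebra_simps)
  finally have h2: "a * snd e + b * snd f = snd Q - snd Z" using D by simp
  have "Q = emb Z e f a b" unfolding emb_def using h1 h2
    by (simp add: prod_eq_iff algebra_simps)
  then show ?thesis by blast
qed

lemma normcore:
  fixes p q r u v w :: real
  assumes E1: "cr 0 0 1 0 p q = 1" and E2: "cr 1 0 p q r u = 1"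
    and E3: "cr p q r u v w = 1" and E4: "cr r u v w 0 1 = 1"
    and E5: "cr v w 0 1 0 0 = 1" and hp: "p \<noteq> 0" and hu: "u \<noteq> 0"
  shows "(cr 0 0 1 0 r u - 1) * (cr 0 0 1 0 p q + cr 0 0 p q r u + cr 0 0 r u v w + cr 0 0 v w 0 1)
     = (cr 0 0 1 0 r u)^2 + 2 * cr 0 0 1 0 r u - 2"
proof -
  define a where "a = p - 1"
  have q: "q = 1" using E1 by (simp add: cr_def)
  have v: "v = 1" using E5 by (simp add: cr_def algebra_simps)
  have r: "r = a * u" using E2 q by (simp add: cr_def a_def algebra_simps)
  have "u * (a * w - 1 - a) = 0" using E4 r v by (simp add: cr_def algebra_simps)
  hence aw: "a * w = 1 + a" using hu by simp
  have "(a * u - a - 1) * w = 0" using E3 r v q by (simp add: cr_def a_def algebra_simps)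
  moreover have "w \<noteq> 0" using aw hp a_def by auto
  ultimately have au: "a * u = a + 1" by simp
  have "a \<noteq> 0" using au by auto
  hence w: "w = u" using au aw by (metis add.commute mult_left_cancel)
  have L: "cr 0 0 1 0 r u = u" by (simp add: cr_def)
  have S: "cr 0 0 1 0 p q + cr 0 0 p q r u + cr 0 0 r u v w + cr 0 0 v w 0 1 = 2 + a * u * u"
    unfolding q v r w cr_def a_def by (simp add: algebra_simps)
  have "(u - 1) * (2 + a * u * u) = u^2 + 2*u - 2"
  proof -
    have "(u - 1) * (2 + a * u * u) = 2*u - 2 + (a * u) * u * u - (a * u) * u"
      by (simp add: algebra_simps power2_eq_square)
    also have "\<dots> = 2*u - 2 + (a + 1) * u * u - (a + 1) * u" unfolding au ..
    also have "\<dots> = u - 2 + (a * u) * u + u * u - a * u" by (simp add: algebra_simps)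
    also have "\<dots> = u^2 + 2*u - 2" using au by (simp add: algebra_simps power2_eq_square)
    finally show ?thesis .
  qed
  then show ?thesis using L S by simp
qed

lemma abs_sgn:
  assumes "s = 1 \<or> s = -1" and "s * X > (0::real)"
  shows "\<bar>X\<bar> = s * X"
  using assms by auto

lemma sgn_val:
  assumes "s = 1 \<or> s = -1" and "s * X > (0::real)" and "\<bar>X\<bar> / 2 = c"
  shows "X = 2 * c * s"
  using assms by auto

lemma cross3_cyc: "cross3 a b c = cross3 b c a"
  by (simp add: cross3_def algebra_simps)

lemma hvs: "hv P 0 = P 0" "hv P 1 = P 1" "hv P 2 = P 2" "hv P 3 = P 3" "hv P 4 = P 4" "hv P 5 = P 5"
  "hv P 6 = P 0" "hv P 7 = P 1" "hv P 8 = P 2" "hv P 9 = P 3" "hv P 10 = P 4"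
  by (simp_all add: hv_def)

lemma sum6: "(\<Sum>i<6. g i) = g 0 + g 1 + g 2 + g 3 + g 4 + (g (5::nat) :: real)"
  by (simp add: eval_nat_numeral)

lemma adds: "(0::nat) + 1 = 1" "(1::nat) + 1 = 2" "(2::nat) + 1 = 3" "(3::nat) + 1 = 4" "(4::nat) + 1 = 5" "(5::nat) + 1 = 6"
  by simp_all

lemma hsum6: "(\<Sum>i<6. h (hv P i) (hv P (i+1))) = h (P 0) (P 1) + h (P 1) (P 2) + h (P 2) (P 3) + h (P 3) (P 4) + h (P 4) (P 5) + (h (P 5) (P 0) :: real)"
  unfolding sum6 adds hvs ..

theorem corollary4:
  fixes P :: "nat \<Rightarrow> real \<times> real" and A k lam :: real
  assumes "convex_hexagon P"
    and "hex_area P = A"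
    and "\<forall>i<6. tri_area (hv P (i + 5)) (hv P i) (hv P (i + 1)) = k"
    and "tri_area (hv P 0) (hv P 1) (hv P 3) = lam * k"
  shows "(lam - 1) * A\<^sup>2 - (lam\<^sup>2 + 4 * lam - 4) * k * A + 2 * (lam\<^sup>2 + 2 * lam - 2) * k\<^sup>2 = 0
       \<and> A = (lam\<^sup>2 + 2 * lam - 2) / (lam - 1) * k"
proof -
  obtain s :: real where s: "s = 1 \<or> s = -1" and
    cv: "\<And>i j. i < 6 \<Longrightarrow> j < 6 \<Longrightarrow> j \<noteq> i \<Longrightarrow> j \<noteq> (i + 1) mod 6 \<Longrightarrow>
        s * cross3 (hv P i) (hv P (i + 1)) (hv P j) > 0"
    using assms(1) unfolding convex_hexagon_def by blast
  have s2: "s * s = 1" using s by auto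
  have cvI: "\<And>i i' j. i < 6 \<Longrightarrow> j < 6 \<Longrightarrow> j \<noteq> i \<Longrightarrow> j \<noteq> i' mod 6 \<Longrightarrow> i' = i + 1 \<Longrightarrow>
        s * cross3 (hv P i) (hv P i') (hv P j) > 0" using cv by blast
  have c501: "s * cross3 (hv P 5) (hv P 6) (hv P 1) > 0" by (rule cvI) simp_all
  have c012: "s * cross3 (hv P 0) (hv P 1) (hv P 2) > 0" by (rule cvI) simp_all
  have c123: "s * cross3 (hv P 1) (hv P 2) (hv P 3) > 0" by (rule cvI) simp_all
  have c234: "s * cross3 (hv P 2) (hv P 3) (hv P 4) > 0" by (rule cvI) simp_all
  have c345: "s * cross3 (hv P 3) (hv P 4) (hv P 5) > 0" by (rule cvI) simp_all
  have c450: "s * cross3 (hv P 4) (hv P 5) (hv P 0) > 0" by (rule cvI) simp_all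
  have c013: "s * cross3 (hv P 0) (hv P 1) (hv P 3) > 0" by (rule cvI) simp_all
  have c023: "s * cross3 (hv P 2) (hv P 3) (hv P 0) > 0" by (rule cvI) simp_all
  have c034: "s * cross3 (hv P 3) (hv P 4) (hv P 0) > 0" by (rule cvI) simp_all
  have c502: "s * cross3 (hv P 5) (hv P 6) (hv P 2) > 0" by (rule cvI) simp_all
  note cs = c501 c012 c123 c234 c345 c450 c013 c023 c034 c502
  have tI: "\<And>i a b. i < 6 \<Longrightarrow> a = i + 5 \<Longrightarrow> b = i + 1 \<Longrightarrow>
      \<bar>cross3 (hv P a) (hv P i) (hv P b)\<bar> / 2 = k"
    using assms(3) by (auto simp: tri_area_def)
  have t0: "\<bar>cross3 (hv P 5) (hv P 0) (hv P 1)\<bar> / 2 = k" by (rule tI) simp_all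
  have t1: "\<bar>cross3 (hv P 6) (hv P 1) (hv P 2)\<bar> / 2 = k" by (rule tI) simp_all
  have t2: "\<bar>cross3 (hv P 7) (hv P 2) (hv P 3)\<bar> / 2 = k" by (rule tI) simp_all
  have t3: "\<bar>cross3 (hv P 8) (hv P 3) (hv P 4)\<bar> / 2 = k" by (rule tI) simp_all
  have t4: "\<bar>cross3 (hv P 9) (hv P 4) (hv P 5)\<bar> / 2 = k" by (rule tI) simp_all
  have t5: "\<bar>cross3 (hv P 10) (hv P 5) (hv P 6)\<bar> / 2 = k" by (rule tI) simp_all
  note ts = t0 t1 t2 t3 t4 t5
  note c501 = cs(1)[unfolded hvs] and c012 = cs(2)[unfolded hvs] and c123 = cs(3)[unfolded hvs]
    and c234 = cs(4)[unfolded hvs] and c345 = cs(5)[unfolded hvs] and c450 = cs(6)[unfolded hvs]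
    and c013 = cs(7)[unfolded hvs] and c023 = cs(8)[unfolded hvs] and c034 = cs(9)[unfolded hvs]
    and c502 = cs(10)[unfolded hvs]
  note t0 = ts(1)[unfolded hvs] and t1 = ts(2)[unfolded hvs] and t2 = ts(3)[unfolded hvs]
    and t3 = ts(4)[unfolded hvs] and t4 = ts(5)[unfolded hvs] and t5 = ts(6)[unfolded hvs]
  have k501: "cross3 (P 5) (P 0) (P 1) = 2 * k * s" using sgn_val[OF s c501 t0] .
  have k012: "cross3 (P 0) (P 1) (P 2) = 2 * k * s" using sgn_val[OF s c012 t1] .
  have k123: "cross3 (P 1) (P 2) (P 3) = 2 * k * s" using sgn_val[OF s c123 t2] .
  have k234: "cross3 (P 2) (P 3) (P 4) = 2 * k * s" using sgn_val[OF s c234 t3] .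
  have k345: "cross3 (P 3) (P 4) (P 5) = 2 * k * s" using sgn_val[OF s c345 t4] .
  have k450: "cross3 (P 4) (P 5) (P 0) = 2 * k * s" using sgn_val[OF s c450 t5] .
  have kL: "cross3 (P 0) (P 1) (P 3) = 2 * (lam * k) * s"
  proof -
    have "\<bar>cross3 (P 0) (P 1) (P 3)\<bar> / 2 = lam * k" using assms(4) unfolding tri_area_def hvs .
    then show ?thesis using sgn_val[OF s c013] by blast
  qed
  have kpos: "k > 0" using k501 c501 s by auto
  have hsum: "(\<Sum>i<6. fst (hv P i) * snd (hv P (i + 1)) - fst (hv P (i + 1)) * snd (hv P i))
     = cross3 (P 0) (P 1) (P 2) + cross3 (P 0) (P 2) (P 3) + cross3 (P 0) (P 3) (P 4) + cross3 (P 0) (P 4) (P 5)"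
    unfolding hsum6[of "\<lambda>a b. fst a * snd b - fst b * snd a"] by (simp add: cross3_def algebra_simps)
  have Spos: "s * (cross3 (P 0) (P 1) (P 2) + cross3 (P 0) (P 2) (P 3) + cross3 (P 0) (P 3) (P 4) + cross3 (P 0) (P 4) (P 5)) > 0"
    using c012 c023 c034 c450 cross3_cyc[of "P 0" "P 2" "P 3"] cross3_cyc[of "P 0" "P 3" "P 4"]
      cross3_cyc[of "P 0" "P 4" "P 5"] cross3_cyc[of "P 4" "P 5" "P 0"]
    by (simp add: algebra_simps)
  define S where "S = cross3 (P 0) (P 1) (P 2) + cross3 (P 0) (P 2) (P 3) + cross3 (P 0) (P 3) (P 4) + cross3 (P 0) (P 4) (P 5)"
  have kS: "S = 2 * A * s"
    using sgn_val[OF s Spos[folded S_def]] assms(2) hsum by (simp add: hex_area_def S_def)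
  define Z where "Z = P 0"
  define e where "e = (fst (P 1) - fst (P 0), snd (P 1) - snd (P 0))"
  define f where "f = (fst (P 5) - fst (P 0), snd (P 5) - snd (P 0))"
  define D where "D = fst e * snd f - snd e * fst f"
  have D: "D = cross3 (P 5) (P 0) (P 1)" by (simp add: D_def e_def f_def cross3_def algebra_simps)
  have Dnz: "D \<noteq> 0" using D c501 by auto
  have e0: "P 0 = emb Z e f 0 0" by (simp add: emb_def Z_def)
  have e1: "P 1 = emb Z e f 1 0" by (simp add: emb_def Z_def e_def)
  have e5: "P 5 = emb Z e f 0 1" by (simp add: emb_def Z_def f_def)
  obtain p q where e2: "P 2 = emb Z e f p q" using emb_exists Dnz D_def by blast
  obtain r u where e3: "P 3 = emb Z e f r u" using emb_exists Dnz D_def by blast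
  obtain v w where e4: "P 4 = emb Z e f v w" using emb_exists Dnz D_def by blast
  note E = e0 e1 e2 e3 e4 e5 cross3_emb D_def[symmetric]
  have DD: "D = 2 * k * s" using k501 D by simp
  have D1: "D * cr 0 1 0 0 1 0 = D" by (simp add: cr_def)
  have n1: "cr 0 0 1 0 p q = 1" using k012 DD Dnz unfolding E by simp
  have n2: "cr 1 0 p q r u = 1" using k123 DD Dnz unfolding E by simp
  have n3: "cr p q r u v w = 1" using k234 DD Dnz unfolding E by simp
  have n4: "cr r u v w 0 1 = 1" using k345 DD Dnz unfolding E by simp
  have n5: "cr v w 0 1 0 0 = 1" using k450 DD Dnz unfolding E by simp
  have hp: "p \<noteq> 0" using c502 unfolding E by (auto simp: cr_def)
  have hu: "u \<noteq> 0" using c013 unfolding E by (auto simp: cr_def)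
  define Ln where "Ln = cr 0 0 1 0 r u"
  define Sn where "Sn = cr 0 0 1 0 p q + cr 0 0 p q r u + cr 0 0 r u v w + cr 0 0 v w 0 1"
  have core: "(Ln - 1) * Sn = Ln^2 + 2 * Ln - 2"
    using normcore[OF n1 n2 n3 n4 n5 hp hu] unfolding Ln_def Sn_def .
  have LL: "D * Ln = 2 * (lam * k) * s" using kL unfolding E Ln_def by simp
  have SS: "D * Sn = 2 * A * s" using kS unfolding S_def E Sn_def by (simp add: algebra_simps)
  have "(D * Ln - D) * (D * Sn) = (D * Ln)^2 + 2 * (D * Ln) * D - 2 * D^2"
  proof -
    have "(D * Ln - D) * (D * Sn) = D^2 * ((Ln - 1) * Sn)" by (simp add: algebra_simps power2_eq_square)
    also have "\<dots> = D^2 * (Ln^2 + 2 * Ln - 2)" using core by simp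
    also have "\<dots> = (D * Ln)^2 + 2 * (D * Ln) * D - 2 * D^2" by (simp add: algebra_simps power2_eq_square)
    finally show ?thesis .
  qed
  hence "(2 * (lam * k) * s - 2 * k * s) * (2 * A * s) = (2 * (lam * k) * s)^2 + 2 * (2 * (lam * k) * s) * (2 * k * s) - 2 * (2 * k * s)^2"
    unfolding LL SS by (simp only: DD)
  hence "4 * k * ((lam - 1) * A) * (s * s) = 4 * k * ((lam^2 + 2 * lam - 2) * k) * (s * s)"
    by (simp add: algebra_simps power2_eq_square)
  hence key: "(lam - 1) * A = (lam^2 + 2 * lam - 2) * k" using kpos s2 by simp
  have lam1: "lam \<noteq> 1"
  proof
    assume "lam = 1"
    then show False using key kpos by simp
  qed
  have c1: "(lam - 1) * A\<^sup>2 - (lam\<^sup>2 + 4 * lam - 4) * k * A + 2 * (lam\<^sup>2 + 2 * lam - 2) * k\<^sup>2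
     = (A - 2 * k) * ((lam - 1) * A - (lam^2 + 2 * lam - 2) * k)"
    by (simp add: algebra_simps power2_eq_square)
  have c2: "A = (lam\<^sup>2 + 2 * lam - 2) / (lam - 1) * k"
    using key lam1 by (simp add: field_simps)
  show ?thesis using c1 c2 key by simp
qed

end
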